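(* Let $F$ be a finite field of odd characteristic in which $-1$ is not a square, and let $g:F^3\to\mathbb{C}$ satisfy $g\sim 1$ on its support $G$. Then $$\|\widehat{g}\|_{L^2(P,d\sigma)} \lesssim \|g\|_{L^2(F^3)} + |G|^{3/8}\Big(\sum_{z\in F}\|g_z*K\|_{L^4(F^3)}^2 + \sum_{\substack{z,z'\in F\\ z\neq z'}}\big\|(g_z*K)\,(g_{z'}*K)\big\|_{L^2(F^3)}\Big)^{1/4}.$$
   Context: $e:(F,+)\to\mathbb{C}^\times$ is a fixed nontrivial additive character; $x\cdot y=\sum_i x_iy_i$ on $F^d$; points of $F^3$ are $x=(\underline{x},x_3)$, $\underline{x}\in F^2$. $P=\{(\underline{x},\underline{x}\cdot\underline{x}):\underline{x}\in F^2\}$. $F^3$ carries counting measure: $\|h\|_{L^p(F^3)}=(\sum_x|h(x)|^p)^{1/p}$, $(h_1*h_2)(x)=\sum_{y\in F^3}h_1(y)h_2(x-y)$. $(d\sigma)^{\vee}(x)=|F|^{-2}\sum_{\xi\in P}e(x\cdot\xi)$, $\delta$ is the indicator of $0\in F^3$, and $K:=(d\sigma)^{\vee}-\delta$. $\widehat{g}(\xi)=\sum_{x\in F^3}g(x)e(-x\cdot\xi)$, $\|\widehat{g}\|_{L^2(P,d\sigma)}=(|F|^{-2}\sum_{\xi\in P}|\widehat{g}(\xi)|^2)^{1/2}$. "$g\sim1$ on its support $G$" means $G=\{x:g(x)\ne0\}$ and $\tfrac12\le|g|\le2$ on $G$. For $z\in F$, $g_z(x)=g(x)$ if $x_3=z$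 and $g_z(x)=0$ otherwise. $X\lesssim Y$ means $X\le CY$ with $C$ an absolute constant independent of $F$ and $g$. *)

theory Defs
  imports Complex_Main "HOL-Algebra.Ring"
begin

text \<open>A finite field is represented as a HOL-Algebra structure R :: nat ring whose carrier
  is a finite set of naturals (every finite field is isomorphic to one of these); this lets the
  implicit constant be quantified before all fields.\<close>

type_synonym pt = "nat \<times> nat \<times> nat"

definition ring_char :: "nat ring \<Rightarrow> nat" where
  "ring_char R = (LEAST n::nat. n > 0 \<and> add_pow R n \<one>\<^bsub>R\<^esub> = \<zero>\<^bsub>R\<^esub>)"

definition carrier3 :: "nat ring \<Rightarrow> pt set" where
  "carrier3 R = carrier R \<times> carrier R \<times> carrier R"

definition dot3 :: "nat ring \<Rightarrow> pt \<Rightarrow> pt \<Rightarrow> nat" where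
  "dot3 R x y = (case x of (x1,x2,x3) \<Rightarrow> case y of (y1,y2,y3) \<Rightarrow>
      (x1 \<otimes>\<^bsub>R\<^esub> y1) \<oplus>\<^bsub>R\<^esub> (x2 \<otimes>\<^bsub>R\<^esub> y2) \<oplus>\<^bsub>R\<^esub> (x3 \<otimes>\<^bsub>R\<^esub> y3))"

definition sub3 :: "nat ring \<Rightarrow> pt \<Rightarrow> pt \<Rightarrow> pt" where
  "sub3 R x y = (case x of (x1,x2,x3) \<Rightarrow> case y of (y1,y2,y3) \<Rightarrow>
      (x1 \<ominus>\<^bsub>R\<^esub> y1, x2 \<ominus>\<^bsub>R\<^esub> y2, x3 \<ominus>\<^bsub>R\<^esub> y3))"

definition nontrivial_additive_char :: "nat ring \<Rightarrow> (nat \<Rightarrow> complex) \<Rightarrow> bool" where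
  "nontrivial_additive_char R e \<longleftrightarrow>
     (\<forall>x\<in>carrier R. \<forall>y\<in>carrier R. e (x \<oplus>\<^bsub>R\<^esub> y) = e x * e y)
     \<and> (\<exists>x\<in>carrier R. e x \<noteq> 1)"

definition parab :: "nat ring \<Rightarrow> pt set" where
  "parab R = {(a, b, (a \<otimes>\<^bsub>R\<^esub> a) \<oplus>\<^bsub>R\<^esub> (b \<otimes>\<^bsub>R\<^esub> b)) | a b. a \<in> carrier R \<and> b \<in> carrier R}"

definition dsigma_check :: "nat ring \<Rightarrow> (nat \<Rightarrow> complex) \<Rightarrow> pt \<Rightarrow> complex" where
  "dsigma_check R e x = (1 / of_nat (card (carrier R))^2) * (\<Sum>\<xi>\<in>parab R. e (dot3 R x \<xi>))"

definition delta0 :: "nat ring \<Rightarrow> pt \<Rightarrow> complex" where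
  "delta0 R x = (if x = (\<zero>\<^bsub>R\<^esub>, \<zero>\<^bsub>R\<^esub>, \<zero>\<^bsub>R\<^esub>) then 1 else 0)"

definition Kker :: "nat ring \<Rightarrow> (nat \<Rightarrow> complex) \<Rightarrow> pt \<Rightarrow> complex" where
  "Kker R e x = dsigma_check R e x - delta0 R x"

definition fhat :: "nat ring \<Rightarrow> (nat \<Rightarrow> complex) \<Rightarrow> (pt \<Rightarrow> complex) \<Rightarrow> pt \<Rightarrow> complex" where
  "fhat R e g \<xi> = (\<Sum>x\<in>carrier3 R. g x * e (\<ominus>\<^bsub>R\<^esub> dot3 R x \<xi>))"

definition conv3 :: "nat ring \<Rightarrow> (pt \<Rightarrow> complex) \<Rightarrow> (pt \<Rightarrow> complex) \<Rightarrow> pt \<Rightarrow> complex" where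
  "conv3 R h1 h2 x = (\<Sum>y\<in>carrier3 R. h1 y * h2 (sub3 R x y))"

definition Lp_norm :: "nat ring \<Rightarrow> real \<Rightarrow> (pt \<Rightarrow> complex) \<Rightarrow> real" where
  "Lp_norm R p h = (\<Sum>x\<in>carrier3 R. cmod (h x) powr p) powr (1 / p)"

definition L2_sigma_norm :: "nat ring \<Rightarrow> (pt \<Rightarrow> complex) \<Rightarrow> real" where
  "L2_sigma_norm R f = sqrt ((1 / real (card (carrier R))^2) * (\<Sum>\<xi>\<in>parab R. (cmod (f \<xi>))^2))"

definition supp3 :: "nat ring \<Rightarrow> (pt \<Rightarrow> complex) \<Rightarrow> pt set" where
  "supp3 R g = {x \<in> carrier3 R. g x \<noteq> 0}"

definition sim_one :: "nat ring \<Rightarrow> (pt \<Rightarrow> complex) \<Rightarrow> bool" where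
  "sim_one R g \<longleftrightarrow> (\<forall>x\<in>supp3 R g. 1/2 \<le> cmod (g x) \<and> cmod (g x) \<le> 2)"

definition slice :: "(pt \<Rightarrow> complex) \<Rightarrow> nat \<Rightarrow> pt \<Rightarrow> complex" where
  "slice g z x = (if snd (snd x) = z then g x else 0)"

end

theory Submission
  imports Defs "HOL-Analysis.L2_Norm"
begin

lemma carrier3_mem: "x \<in> carrier3 R \<longleftrightarrow> fst x \<in> carrier R \<and> fst (snd x) \<in> carrier R \<and> snd (snd x) \<in> carrier R"
  by (cases x) (auto simp: carrier3_def)

lemma finite_carrier3: "finite (carrier R) \<Longrightarrow> finite (carrier3 R)"
  by (simp add: carrier3_def)

lemma dot3_closed: "cring R \<Longrightarrow> x \<in> carrier3 R \<Longrightarrow> y \<in> carrier3 R \<Longrightarrow> dot3 R x y \<in> carrier R"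
  by (cases x; cases y) (auto simp: carrier3_def dot3_def cring.axioms ring.ring_simprules)

lemma sub3_closed: "cring R \<Longrightarrow> x \<in> carrier3 R \<Longrightarrow> y \<in> carrier3 R \<Longrightarrow> sub3 R x y \<in> carrier3 R"
  by (cases x; cases y) (auto simp: carrier3_def sub3_def cring.axioms ring.ring_simprules)

lemma parab_sub: "cring R \<Longrightarrow> parab R \<subseteq> carrier3 R"
  by (auto simp: carrier3_def parab_def cring.axioms ring.ring_simprules)

lemma dot3_sub: "cring R \<Longrightarrow> x \<in> carrier3 R \<Longrightarrow> y \<in> carrier3 R \<Longrightarrow> \<xi> \<in> carrier3 R \<Longrightarrow>
   (\<ominus>\<^bsub>R\<^esub> dot3 R y \<xi>) \<oplus>\<^bsub>R\<^esub> dot3 R x \<xi> = dot3 R (sub3 R x y) \<xi>"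
proof -
  assume c: "cring R" and m: "x \<in> carrier3 R" "y \<in> carrier3 R" "\<xi> \<in> carrier3 R"
  interpret cring R by fact
  obtain x1 x2 x3 y1 y2 y3 a b d where eq: "x = (x1,x2,x3)" "y = (y1,y2,y3)" "\<xi> = (a,b,d)"
    by (cases x; cases y; cases \<xi>) auto
  show ?thesis using m unfolding eq dot3_def sub3_def carrier3_def
    by simp algebra
qed

lemma sub3_zero: "cring R \<Longrightarrow> x \<in> carrier3 R \<Longrightarrow> y \<in> carrier3 R \<Longrightarrow>
   sub3 R x y = (\<zero>\<^bsub>R\<^esub>, \<zero>\<^bsub>R\<^esub>, \<zero>\<^bsub>R\<^esub>) \<longleftrightarrow> x = y"
proof -
  assume c: "cring R" and m: "x \<in> carrier3 R" "y \<in> carrier3 R"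
  interpret cring R by fact
  obtain x1 x2 x3 y1 y2 y3 where eq: "x = (x1,x2,x3)" "y = (y1,y2,y3)"
    by (cases x; cases y) auto
  have r: "a \<ominus>\<^bsub>R\<^esub> b = \<zero>\<^bsub>R\<^esub> \<longleftrightarrow> a = b" if "a \<in> carrier R" "b \<in> carrier R" for a b
    using that by (metis a_minus_def add.inv_closed minus_equality r_neg)
  show ?thesis using m unfolding eq sub3_def carrier3_def
    by (auto simp: r)
qed

lemma char_props:
  assumes c: "cring R" and fin: "finite (carrier R)" and ch: "nontrivial_additive_char R e"
    and e0: "e \<zero>\<^bsub>R\<^esub> = 1" and b: "b \<in> carrier R"
  shows "cmod (e b) = 1 \<and> cnj (e b) = e (\<ominus>\<^bsub>R\<^esub> b)"
proof -
  interpret cring R by fact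
  have hom: "e (x \<oplus>\<^bsub>R\<^esub> y) = e x * e y" if "x \<in> carrier R" "y \<in> carrier R" for x y
    using ch that unfolding nontrivial_additive_char_def by blast
  define M where "M = Max ((\<lambda>x. cmod (e x)) ` carrier R)"
  have ne: "carrier R \<noteq> {}" by auto
  obtain a where a: "a \<in> carrier R" "cmod (e a) = M"
    proof -
    have "M \<in> (\<lambda>x. cmod (e x)) ` carrier R" unfolding M_def using fin ne by (intro Max_in) auto
    thus ?thesis using that by auto
  qed
  have le: "cmod (e x) \<le> M" if "x \<in> carrier R" for x
    unfolding M_def using fin that by auto
  have "M \<ge> 1" using le[of "\<zero>\<^bsub>R\<^esub>"] e0 by simp
  have "M * M \<le> M" using le[of "a \<oplus>\<^bsub>R\<^esub> a"] hom[OF a(1) a(1)] a by (simp add: norm_mult)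
  hence "M * M \<le> M * 1" by simp
  hence M1: "M \<le> 1" using \<open>M \<ge> 1\<close> mult_le_cancel_left_pos[of M M 1] by simp
  have inv: "e b * e (\<ominus>\<^bsub>R\<^esub> b) = 1" using hom[of b "\<ominus>\<^bsub>R\<^esub> b"] b e0 by (simp add: r_neg)
  have n1: "cmod (e b) \<le> 1" "cmod (e (\<ominus>\<^bsub>R\<^esub> b)) \<le> 1" using le[of b] le[of "\<ominus>\<^bsub>R\<^esub> b"] b M1 by auto
  have "cmod (e b) * cmod (e (\<ominus>\<^bsub>R\<^esub> b)) = 1" using inv by (metis norm_mult norm_one)
  moreover have "cmod (e b) * cmod (e (\<ominus>\<^bsub>R\<^esub> b)) \<le> cmod (e b)"
    using n1 by (intro mult_left_le) auto
  ultimately have nb: "cmod (e b) = 1" using n1 by linarith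
  have "e b * cnj (e b) = 1" using nb complex_norm_square[of "e b"] by simp
  hence "cnj (e b) = e (\<ominus>\<^bsub>R\<^esub> b)" using inv
  proof -
    assume h1: "e b * cnj (e b) = 1"
    have "cnj (e b) = cnj (e b) * (e b * e (\<ominus>\<^bsub>R\<^esub> b))" using inv by simp
    also have "\<dots> = (e b * cnj (e b)) * e (\<ominus>\<^bsub>R\<^esub> b)" by (simp add: algebra_simps)
    finally show ?thesis using h1 by simp
  qed
  thus ?thesis using nb by simp
qed

lemma fourier_id:
  assumes c: "cring R" and fin: "finite (carrier R)"
    and hom: "\<And>x y. x \<in> carrier R \<Longrightarrow> y \<in> carrier R \<Longrightarrow> e (x \<oplus>\<^bsub>R\<^esub> y) = e x * e y"
    and cj: "\<And>a. a \<in> carrier R \<Longrightarrow> cnj (e a) = e (\<ominus>\<^bsub>R\<^esub> a)"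
  shows "(\<Sum>\<xi>\<in>parab R. complex_of_real ((cmod (fhat R e g \<xi>))^2))
     = of_nat (card (carrier R))^2 * (\<Sum>x\<in>carrier3 R. cnj (g x) * conv3 R g (dsigma_check R e) x)"
proof -
  interpret cring R by fact
  let ?A = "carrier3 R" and ?P = "parab R"
  have fA: "finite ?A" using fin by (rule finite_carrier3)
  have PA: "?P \<subseteq> ?A" using c by (rule parab_sub)
  have fP: "finite ?P" using fA PA finite_subset by blast
  have N0: "of_nat (card (carrier R)) \<noteq> (0::complex)" using fin by (auto simp: card_eq_0_iff)
  have cf: "cnj (fhat R e g \<xi>) = (\<Sum>x\<in>?A. cnj (g x) * e (dot3 R x \<xi>))" if "\<xi> \<in> ?A" for \<xi>
    unfolding fhat_def cnj_sum
  proof (rule sum.cong[OF refl])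
    fix x assume x: "x \<in> ?A"
    have d: "dot3 R x \<xi> \<in> carrier R" using dot3_closed[OF c x that] .
    show "cnj (g x * e (\<ominus>\<^bsub>R\<^esub> dot3 R x \<xi>)) = cnj (g x) * e (dot3 R x \<xi>)"
      using cj[of "\<ominus>\<^bsub>R\<^esub> dot3 R x \<xi>"] d by simp
  qed
  have ex: "e (\<ominus>\<^bsub>R\<^esub> dot3 R y \<xi>) * e (dot3 R x \<xi>) = e (dot3 R (sub3 R x y) \<xi>)"
    if "x \<in> ?A" "y \<in> ?A" "\<xi> \<in> ?A" for x y \<xi>
    using hom[of "\<ominus>\<^bsub>R\<^esub> dot3 R y \<xi>" "dot3 R x \<xi>"] dot3_closed[OF c] dot3_sub[OF c] that by simp
  have "(\<Sum>\<xi>\<in>?P. complex_of_real ((cmod (fhat R e g \<xi>))^2))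
      = (\<Sum>\<xi>\<in>?P. fhat R e g \<xi> * cnj (fhat R e g \<xi>))"
    by (intro sum.cong refl) (rule complex_norm_square)
  also have "\<dots> = (\<Sum>\<xi>\<in>?P. \<Sum>x\<in>?A. \<Sum>y\<in>?A. cnj (g x) * g y * e (dot3 R (sub3 R x y) \<xi>))"
  proof (rule sum.cong[OF refl])
    fix \<xi> assume "\<xi> \<in> ?P"
    hence \<xi>: "\<xi> \<in> ?A" using PA by auto
    have "fhat R e g \<xi> * cnj (fhat R e g \<xi>)
        = (\<Sum>y\<in>?A. g y * e (\<ominus>\<^bsub>R\<^esub> dot3 R y \<xi>)) * (\<Sum>x\<in>?A. cnj (g x) * e (dot3 R x \<xi>))"
      using cf[OF \<xi>] unfolding fhat_def by simp
    also have "\<dots> = (\<Sum>x\<in>?A. \<Sum>y\<in>?A. cnj (g x) * g y * (e (\<ominus>\<^bsub>R\<^esub> dot3 R y \<xi>) * e (dot3 R x \<xi>)))"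
      by (subst sum_product, subst sum.swap) (simp add: algebra_simps)
    also have "\<dots> = (\<Sum>x\<in>?A. \<Sum>y\<in>?A. cnj (g x) * g y * e (dot3 R (sub3 R x y) \<xi>))"
      using ex \<xi> by (intro sum.cong refl) simp
    finally show "fhat R e g \<xi> * cnj (fhat R e g \<xi>) = (\<Sum>x\<in>?A. \<Sum>y\<in>?A. cnj (g x) * g y * e (dot3 R (sub3 R x y) \<xi>))" .
  qed
  also have "\<dots> = (\<Sum>x\<in>?A. \<Sum>y\<in>?A. \<Sum>\<xi>\<in>?P. cnj (g x) * g y * e (dot3 R (sub3 R x y) \<xi>))"
    by (subst sum.swap) (simp add: sum.swap[of _ ?P])
  also have "\<dots> = of_nat (card (carrier R))^2 * (\<Sum>x\<in>?A. cnj (g x) * conv3 R g (dsigma_check R e) x)"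
    unfolding conv3_def dsigma_check_def using N0
    by (simp add: sum_distrib_left algebra_simps)
  finally show ?thesis .
qed

lemma conv_dsigma:
  assumes c: "cring R" and fin: "finite (carrier R)" and x: "x \<in> carrier3 R"
  shows "conv3 R g (dsigma_check R e) x = g x + conv3 R g (Kker R e) x"
proof -
  have d: "(\<Sum>y\<in>carrier3 R. g y * delta0 R (sub3 R x y)) = g x"
  proof -
    have "(\<Sum>y\<in>carrier3 R. g y * delta0 R (sub3 R x y)) = (\<Sum>y\<in>carrier3 R. if y = x then g y else 0)"
      by (intro sum.cong refl) (auto simp: delta0_def sub3_zero[OF c x])
    also have "\<dots> = g x" using x finite_carrier3[OF fin] by simp
    finally show ?thesis .
  qed
  show ?thesis unfolding conv3_def Kker_def using d
    by (simp add: algebra_simps sum_subtractf)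
qed

lemma conv_slices:
  assumes fin: "finite (carrier R)"
  shows "conv3 R g K x = (\<Sum>z\<in>carrier R. conv3 R (slice g z) K x)"
proof -
  have gs: "g y = (\<Sum>z\<in>carrier R. slice g z y)" if "y \<in> carrier3 R" for y
  proof -
    have "snd (snd y) \<in> carrier R" using that by (simp add: carrier3_mem)
    thus ?thesis unfolding slice_def using fin by simp
  qed
  have "conv3 R g K x = (\<Sum>y\<in>carrier3 R. \<Sum>z\<in>carrier R. slice g z y * K (sub3 R x y))"
    unfolding conv3_def by (intro sum.cong refl) (simp add: gs sum_distrib_right)
  also have "\<dots> = (\<Sum>z\<in>carrier R. conv3 R (slice g z) K x)"
    unfolding conv3_def by (rule sum.swap)
  finally show ?thesis .
qed

lemma L2_set_sum_le:
  assumes "finite Z"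
  shows "L2_set (\<lambda>x. \<Sum>z\<in>Z. f z x) A \<le> (\<Sum>z\<in>Z. L2_set (f z) A)"
  using assms
proof (induction Z rule: finite_induct)
  case empty
  then show ?case by (simp add: L2_set_def)
next
  case (insert a Z)
  have "L2_set (\<lambda>x. \<Sum>z\<in>insert a Z. f z x) A = L2_set (\<lambda>x. f a x + (\<Sum>z\<in>Z. f z x)) A"
    using insert by simp
  also have "\<dots> \<le> L2_set (f a) A + L2_set (\<lambda>x. \<Sum>z\<in>Z. f z x) A" by (rule L2_set_triangle_ineq)
  also have "\<dots> \<le> L2_set (f a) A + (\<Sum>z\<in>Z. L2_set (f z) A)" using insert by simp
  finally show ?case using insert by simp
qed

lemma Lp4_sq: "(Lp_norm R 4 f)^2 = L2_set (\<lambda>x. (cmod (f x))^2) (carrier3 R)"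
proof -
  have "(Lp_norm R 4 f)^2 = ((\<Sum>x\<in>carrier3 R. (cmod (f x))^4) powr (1/4)) powr 2"
    unfolding Lp_norm_def by (simp add: powr_ge_zero)
  also have "\<dots> = (\<Sum>x\<in>carrier3 R. (cmod (f x))^4) powr (1/2)" by (simp add: powr_powr)
  also have "\<dots> = sqrt (\<Sum>x\<in>carrier3 R. ((cmod (f x))^2)^2)"
    by (subst powr_half_sqrt) (auto intro: sum_nonneg simp: power_mult[symmetric])
  finally show ?thesis unfolding L2_set_def by simp
qed

lemma Lp2_eq: "Lp_norm R 2 f = L2_set (\<lambda>x. cmod (f x)) (carrier3 R)"
  unfolding Lp_norm_def L2_set_def
  by (simp add: powr_half_sqrt sum_nonneg)

lemma bound4:
  assumes fZ: "finite Z" and hx: "\<And>x. x \<in> B \<Longrightarrow> h x = (\<Sum>z\<in>Z. hz z x)"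
  shows "sqrt (\<Sum>x\<in>B. (cmod (h x))^4) \<le> (\<Sum>z\<in>Z. \<Sum>z'\<in>Z. L2_set (\<lambda>x. cmod (hz z x * hz z' x)) B)"
proof -
  have "sqrt (\<Sum>x\<in>B. (cmod (h x))^4) = L2_set (\<lambda>x. (cmod (h x))^2) B"
    unfolding L2_set_def by (simp add: power_mult[symmetric])
  also have "\<dots> \<le> L2_set (\<lambda>x. \<Sum>z\<in>Z. \<Sum>z'\<in>Z. cmod (hz z x * hz z' x)) B"
  proof (rule L2_set_mono)
    fix x assume x: "x \<in> B"
    have "cmod (h x) \<le> (\<Sum>z\<in>Z. cmod (hz z x))" using hx[OF x] norm_sum by simp
    hence "(cmod (h x))^2 \<le> (\<Sum>z\<in>Z. cmod (hz z x))^2" by (simp add: power_mono)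
    also have "\<dots> = (\<Sum>z\<in>Z. \<Sum>z'\<in>Z. cmod (hz z x * hz z' x))"
      by (simp add: power2_eq_square sum_product norm_mult)
    finally show "(cmod (h x))^2 \<le> (\<Sum>z\<in>Z. \<Sum>z'\<in>Z. cmod (hz z x * hz z' x))" .
  qed simp
  also have "\<dots> \<le> (\<Sum>z\<in>Z. L2_set (\<lambda>x. \<Sum>z'\<in>Z. cmod (hz z x * hz z' x)) B)"
    by (rule L2_set_sum_le[OF fZ])
  also have "\<dots> \<le> (\<Sum>z\<in>Z. \<Sum>z'\<in>Z. L2_set (\<lambda>x. cmod (hz z x * hz z' x)) B)"
    by (intro sum_mono L2_set_sum_le[OF fZ])
  finally show ?thesis .
qed

lemma holder_bound:
  fixes g h :: "'a \<Rightarrow> complex"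
  assumes fB: "finite B" and GB: "G \<subseteq> B" and g0: "\<And>x. x \<in> B \<Longrightarrow> x \<notin> G \<Longrightarrow> g x = 0"
    and g2: "\<And>x. x \<in> G \<Longrightarrow> cmod (g x) \<le> 2"
  shows "(\<Sum>x\<in>B. cmod (g x) * cmod (h x))
     \<le> 2 * (sqrt (card G) * sqrt (sqrt (card G) * sqrt (\<Sum>x\<in>B. (cmod (h x))^4)))"
proof -
  have fG: "finite G" using fB GB finite_subset by blast
  have "(\<Sum>x\<in>B. cmod (g x) * cmod (h x)) = (\<Sum>x\<in>G. cmod (g x) * cmod (h x))"
    using fB GB g0 by (intro sum.mono_neutral_right) auto
  also have "\<dots> \<le> (\<Sum>x\<in>G. 2 * cmod (h x))" using g2 by (intro sum_mono mult_right_mono) auto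
  also have "\<dots> = 2 * (\<Sum>x\<in>G. \<bar>1\<bar> * \<bar>cmod (h x)\<bar>)" by (simp add: sum_distrib_left)
  also have "\<dots> \<le> 2 * (L2_set (\<lambda>_. 1) G * L2_set (\<lambda>x. cmod (h x)) G)"
    using L2_set_mult_ineq[of "\<lambda>_. (1::real)" "\<lambda>x. cmod (h x)" G] by simp
  also have "L2_set (\<lambda>x. cmod (h x)) G \<le> sqrt (sqrt (card G) * sqrt (\<Sum>x\<in>B. (cmod (h x))^4))"
  proof -
    have "(\<Sum>x\<in>G. (cmod (h x))^2) = (\<Sum>x\<in>G. \<bar>1\<bar> * \<bar>(cmod (h x))^2\<bar>)" by simp
    also have "\<dots> \<le> L2_set (\<lambda>_. 1) G * L2_set (\<lambda>x. (cmod (h x))^2) G"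
      by (rule L2_set_mult_ineq)
    also have "L2_set (\<lambda>x. (cmod (h x))^2) G \<le> sqrt (\<Sum>x\<in>B. (cmod (h x))^4)"
    proof -
      have "(\<Sum>x\<in>G. ((cmod (h x))^2)^2) \<le> (\<Sum>x\<in>B. (cmod (h x))^4)"
      proof -
        have "(\<Sum>x\<in>G. ((cmod (h x))^2)^2) = (\<Sum>x\<in>G. (cmod (h x))^4)" by (simp add: power_mult[symmetric])
        also have "\<dots> \<le> (\<Sum>x\<in>B. (cmod (h x))^4)" using fB GB by (intro sum_mono2) auto
        finally show ?thesis .
      qed
      thus ?thesis unfolding L2_set_def by simp
    qed
    finally have "(\<Sum>x\<in>G. (cmod (h x))^2) \<le> sqrt (card G) * sqrt (\<Sum>x\<in>B. (cmod (h x))^4)"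
      by (simp add: L2_set_constant mult_left_mono)
    thus ?thesis unfolding L2_set_def by simp
  qed
  hence "2 * (L2_set (\<lambda>_. 1) G * L2_set (\<lambda>x. cmod (h x)) G) \<le> 2 * (sqrt (card G) * sqrt (sqrt (card G) * sqrt (\<Sum>x\<in>B. (cmod (h x))^4)))"
    by (simp add: L2_set_constant mult_left_mono)
  finally show ?thesis .
qed

lemma powr_comb:
  fixes n S :: real
  assumes "n \<ge> 0" "S \<ge> 0"
  shows "sqrt n * sqrt (sqrt n * S) = (n powr (3/8) * S powr (1/4))^2"
proof -
  have "sqrt n * sqrt (sqrt n * S) = n powr (1/2) * ((n powr (1/2) * S) powr (1/2))"
    using assms by (simp add: powr_half_sqrt)
  also have "\<dots> = n powr (1/2) * (n powr (1/4) * S powr (1/2))"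
    by (simp add: powr_mult powr_powr)
  also have "\<dots> = n powr (3/4) * S powr (1/2)"
    using powr_add[of n "1/2" "1/4"] by (simp add: mult.assoc[symmetric])
  also have "\<dots> = (n powr (3/8) * S powr (1/4))^2"
    using powr_add[of n "3/8" "3/8"] powr_add[of S "1/4" "1/4"]
    by (simp add: power2_eq_square algebra_simps)
  finally show ?thesis .
qed

theorem mainTheorem3:
  "\<exists>C::real. \<forall>(R::nat ring) (e::nat \<Rightarrow> complex) (g::pt \<Rightarrow> complex).
     field R \<and> finite (carrier R) \<and> odd (ring_char R)
     \<and> \<not> (\<exists>x\<in>carrier R. x \<otimes>\<^bsub>R\<^esub> x = \<ominus>\<^bsub>R\<^esub> \<one>\<^bsub>R\<^esub>)
     \<and> nontrivial_additive_char R e \<and> sim_one R g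
     \<longrightarrow> L2_sigma_norm R (fhat R e g)
         \<le> C * (Lp_norm R 2 g + real (card (supp3 R g)) powr (3/8) *
              ((\<Sum>z\<in>carrier R. (Lp_norm R 4 (conv3 R (slice g z) (Kker R e))) ^ 2)
               + (\<Sum>z\<in>carrier R. \<Sum>z'\<in>carrier R - {z}.
                    Lp_norm R 2 (\<lambda>x. conv3 R (slice g z) (Kker R e) x * conv3 R (slice g z') (Kker R e) x)))
              powr (1/4))"
proof (rule exI[of _ 2], intro allI impI, elim conjE)
  fix R :: "nat ring" and e :: "nat \<Rightarrow> complex" and g :: "pt \<Rightarrow> complex"
  assume fld: "field R" and fin: "finite (carrier R)" and ch: "nontrivial_additive_char R e"
    and sim: "sim_one R g"
  have c: "cring R" using fld by (simp add: field_def domain_def)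
  have nc: "\<And>x. x \<in> carrier R \<Longrightarrow> \<ominus>\<^bsub>R\<^esub> x \<in> carrier R"
  proof -
    interpret cring R by (rule c)
    show "\<And>x. x \<in> carrier R \<Longrightarrow> \<ominus>\<^bsub>R\<^esub> x \<in> carrier R" by simp
  qed
  have z0: "\<zero>\<^bsub>R\<^esub> \<in> carrier R" and rz: "\<And>x. x \<in> carrier R \<Longrightarrow> x \<oplus>\<^bsub>R\<^esub> \<zero>\<^bsub>R\<^esub> = x"
  proof -
    interpret cring R by (rule c)
    show "\<zero>\<^bsub>R\<^esub> \<in> carrier R" by simp
    show "\<And>x. x \<in> carrier R \<Longrightarrow> x \<oplus>\<^bsub>R\<^esub> \<zero>\<^bsub>R\<^esub> = x" by simp
  qed
  let ?A = "carrier3 R"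
  define hz where "hz z = conv3 R (slice g z) (Kker R e)" for z
  define h where "h = conv3 R g (Kker R e)"
  define S where "S = (\<Sum>z\<in>carrier R. (Lp_norm R 4 (hz z)) ^ 2)
               + (\<Sum>z\<in>carrier R. \<Sum>z'\<in>carrier R - {z}. Lp_norm R 2 (\<lambda>x. hz z x * hz z' x))"
  define n where "n = real (card (supp3 R g))"
  define a where "a = Lp_norm R 2 g"
  have fA: "finite ?A" using fin by (rule finite_carrier3)
  have hom: "e (x \<oplus>\<^bsub>R\<^esub> y) = e x * e y" if "x \<in> carrier R" "y \<in> carrier R" for x y
    using ch that unfolding nontrivial_additive_char_def by blast
  have a0: "a \<ge> 0" unfolding a_def Lp_norm_def by simp
  have S0': "S \<ge> 0" unfolding S_def Lp_norm_def by (intro add_nonneg_nonneg sum_nonneg) auto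
  have rhs0: "0 \<le> 2 * (a + n powr (3/8) * S powr (1/4))" using a0 by simp
  show "L2_sigma_norm R (fhat R e g) \<le> 2 * (Lp_norm R 2 g + real (card (supp3 R g)) powr (3/8) *
              ((\<Sum>z\<in>carrier R. (Lp_norm R 4 (conv3 R (slice g z) (Kker R e))) ^ 2)
               + (\<Sum>z\<in>carrier R. \<Sum>z'\<in>carrier R - {z}.
                    Lp_norm R 2 (\<lambda>x. conv3 R (slice g z) (Kker R e) x * conv3 R (slice g z') (Kker R e) x)))
              powr (1/4))"
    (is "?L \<le> ?Rhs")
  proof -
    have Rhs: "?Rhs = 2 * (a + n powr (3/8) * S powr (1/4))"
      unfolding a_def n_def S_def hz_def by simp
    show ?thesis
    proof (cases "e \<zero>\<^bsub>R\<^esub> = 1")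
      case False
      have "e \<zero>\<^bsub>R\<^esub> = e \<zero>\<^bsub>R\<^esub> * e \<zero>\<^bsub>R\<^esub>" using hom[OF z0 z0] rz[OF z0] by simp
      hence e0: "e \<zero>\<^bsub>R\<^esub> = 0" using False by (metis mult_cancel_left1 mult.commute)
      have ez: "e x = 0" if "x \<in> carrier R" for x
        using hom[OF that z0] rz[OF that] e0 by simp
      have "fhat R e g \<xi> = 0" if "\<xi> \<in> parab R" for \<xi>
        unfolding fhat_def
      proof (intro sum.neutral ballI)
        fix x assume x: "x \<in> ?A"
        have "\<xi> \<in> ?A" using that parab_sub[OF c] by auto
        hence "dot3 R x \<xi> \<in> carrier R" using dot3_closed[OF c x] by simp
        hence "e (\<ominus>\<^bsub>R\<^esub> dot3 R x \<xi>) = 0" using ez nc by blast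
        thus "g x * e (\<ominus>\<^bsub>R\<^esub> dot3 R x \<xi>) = 0" by simp
      qed
      hence "?L = 0" unfolding L2_sigma_norm_def by simp
      thus ?thesis using Rhs rhs0 by simp
    next
      case True
      have cj: "cnj (e b) = e (\<ominus>\<^bsub>R\<^esub> b)" if "b \<in> carrier R" for b
        using char_props[OF c fin ch True that] by simp
      define W where "W = (\<Sum>x\<in>?A. cnj (g x) * conv3 R g (dsigma_check R e) x)"
      have fid: "(\<Sum>\<xi>\<in>parab R. complex_of_real ((cmod (fhat R e g \<xi>))^2)) = of_nat (card (carrier R))^2 * W"
        unfolding W_def by (rule fourier_id[OF c fin hom cj])
      have N0: "card (carrier R) \<noteq> 0" using fin z0 by (auto simp: card_eq_0_iff)
      have "(\<Sum>\<xi>\<in>parab R. (cmod (fhat R e g \<xi>))^2) = Re (of_nat (card (carrier R))^2 * W)"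
        using arg_cong[OF fid, of Re] by simp
      hence X: "1 / real (card (carrier R))^2 * (\<Sum>\<xi>\<in>parab R. (cmod (fhat R e g \<xi>))^2) = Re W"
        using N0 by simp
      have W: "W = (\<Sum>x\<in>?A. complex_of_real ((cmod (g x))^2)) + (\<Sum>x\<in>?A. cnj (g x) * h x)"
      proof -
        have "(\<Sum>x\<in>?A. cnj (g x) * conv3 R g (dsigma_check R e) x) = (\<Sum>x\<in>?A. g x * cnj (g x) + cnj (g x) * h x)"
          by (intro sum.cong refl) (simp add: conv_dsigma[OF c fin] h_def distrib_left mult.commute)
        also have "\<dots> = (\<Sum>x\<in>?A. complex_of_real ((cmod (g x))^2)) + (\<Sum>x\<in>?A. cnj (g x) * h x)"
          unfolding sum.distrib complex_norm_square ..
        finally show ?thesis by (simp add: W_def h_def)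
      qed
      have "Re (\<Sum>x\<in>?A. cnj (g x) * h x) \<le> cmod (\<Sum>x\<in>?A. cnj (g x) * h x)" by (rule complex_Re_le_cmod)
      also have "\<dots> \<le> (\<Sum>x\<in>?A. cmod (g x) * cmod (h x))"
        by (rule order_trans[OF norm_sum]) (simp add: norm_mult)
      also have "\<dots> \<le> 2 * (sqrt n * sqrt (sqrt n * sqrt (\<Sum>x\<in>?A. (cmod (h x))^4)))"
      proof -
        have G1: "supp3 R g \<subseteq> ?A" unfolding supp3_def by blast
        have G2: "g x = 0" if "x \<in> ?A" "x \<notin> supp3 R g" for x using that unfolding supp3_def by blast
        have G3: "cmod (g x) \<le> 2" if "x \<in> supp3 R g" for x using sim that unfolding sim_one_def by blast
        show ?thesis unfolding n_def by (rule holder_bound[OF fA G1 G2 G3])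
      qed
      also have "\<dots> \<le> 2 * (sqrt n * sqrt (sqrt n * S))"
      proof -
        have "sqrt (\<Sum>x\<in>?A. (cmod (h x))^4) \<le> (\<Sum>z\<in>carrier R. \<Sum>z'\<in>carrier R. L2_set (\<lambda>x. cmod (hz z x * hz z' x)) ?A)"
          by (rule bound4[OF fin]) (unfold h_def hz_def, rule conv_slices[OF fin])
        also have "\<dots> = S"
        proof -
          have "(\<Sum>z\<in>carrier R. \<Sum>z'\<in>carrier R. L2_set (\<lambda>x. cmod (hz z x * hz z' x)) ?A)
              = (\<Sum>z\<in>carrier R. L2_set (\<lambda>x. cmod (hz z x * hz z x)) ?A
                   + (\<Sum>z'\<in>carrier R - {z}. L2_set (\<lambda>x. cmod (hz z x * hz z' x)) ?A))"
            using fin by (intro sum.cong refl) (simp add: sum.remove)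
          thus ?thesis unfolding S_def Lp4_sq Lp2_eq
            by (simp add: sum.distrib norm_mult power2_eq_square)
        qed
        finally have "sqrt (\<Sum>x\<in>?A. (cmod (h x))^4) \<le> S" .
        thus ?thesis unfolding n_def
          by (intro mult_left_mono real_sqrt_le_mono) auto
      qed
      also have "\<dots> = 2 * (n powr (3/8) * S powr (1/4))^2"
        using powr_comb[of n S] S0' by (simp add: n_def)
      finally have B: "Re (\<Sum>x\<in>?A. cnj (g x) * h x) \<le> 2 * (n powr (3/8) * S powr (1/4))^2" .
      have aa: "a^2 = (\<Sum>x\<in>?A. (cmod (g x))^2)"
        unfolding a_def Lp2_eq L2_set_def by (simp add: sum_nonneg)
      have "Re W = (\<Sum>x\<in>?A. (cmod (g x))^2) + Re (\<Sum>x\<in>?A. cnj (g x) * h x)"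
        unfolding W by (simp add: Re_sum)
      hence "Re W \<le> a^2 + 2 * (n powr (3/8) * S powr (1/4))^2" using B aa by simp
      also have "\<dots> \<le> (2 * (a + n powr (3/8) * S powr (1/4)))^2"
        using a0 by (simp add: power2_eq_square algebra_simps)
      finally have "Re W \<le> (2 * (a + n powr (3/8) * S powr (1/4)))^2" .
      hence "?L \<le> 2 * (a + n powr (3/8) * S powr (1/4))"
        unfolding L2_sigma_norm_def X using rhs0 by (simp add: real_sqrt_le_iff real_le_lsqrt)
      thus ?thesis using Rhs by simp
    qed
  qed
qed

end
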